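(* For $n>4$ let $P_{2n}(x)=x^{2n}+x^{n+4}+x^{n+2}+x^n+x^{n-2}+x^{n-4}+1$. Then $$\lim_{n\to\infty}C(P_{2n})=\frac{2}{\pi}\arccos\!\left(\sqrt{\frac38+\frac{\sqrt{13}}{8}}\right)\approx 0.2741871146.$$
   Context: For a polynomial $P$ of degree $d$, let $I(P)$ and $E(P)$ denote the numbers of complex zeros of $P$ (counted with multiplicity) of modulus $<1$ and $>1$ respectively, and $C(P)=\frac{I(P)+E(P)}{d}$. *)

theory Defs
  imports "HOL-Analysis.Analysis" "HOL-Computational_Algebra.Polynomial"
begin

definition zeros_inside :: "complex poly \<Rightarrow> nat" where
  "zeros_inside p = (\<Sum>z\<in>{z. poly p z = 0 \<and> cmod z < 1}. order z p)"

definition zeros_outside :: "complex poly \<Rightarrow> nat" where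
  "zeros_outside p = (\<Sum>z\<in>{z. poly p z = 0 \<and> cmod z > 1}. order z p)"

definition C_ratio :: "complex poly \<Rightarrow> real" where
  "C_ratio p = real (zeros_inside p + zeros_outside p) / real (degree p)"

definition P2n :: "nat \<Rightarrow> complex poly" where
  "P2n n = monom 1 (2*n) + monom 1 (n+4) + monom 1 (n+2) + monom 1 n
           + monom 1 (n-2) + monom 1 (n-4) + 1"

end

theory Submission
  imports Defs "HOL-Computational_Algebra.Fundamental_Theorem_Algebra"
begin


fun cheb :: "nat \<Rightarrow> 'a::comm_ring_1 poly" where
  "cheb 0 = 1"
| "cheb (Suc 0) = [:0,1:]"
| "cheb (Suc (Suc n)) = pCons 0 (smult 2 (cheb (Suc n))) - cheb n"

definition Fp :: "'a::comm_ring_1 poly" where "Fp = [:1,0,-12,0,16:]"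

definition Q :: "nat \<Rightarrow> 'a::comm_ring_1 poly" where "Q n = smult 2 (cheb n) + Fp"

lemma cheb_cos: "poly (cheb n) (cos t) = cos (real n * t)"
proof (induction n rule: cheb.induct)
  case 1 then show ?case by simp
next
  case 2 then show ?case by simp
next
  case (3 n)
  define a where "a = real (Suc n) * t"
  have e1: "real (Suc (Suc n)) * t = a + t" by (simp add: a_def algebra_simps)
  have e2: "real n * t = a - t" by (simp add: a_def algebra_simps)
  have h1: "poly (cheb (Suc n)) (cos t) = cos a" using 3(1) by (simp add: a_def)
  have h0: "poly (cheb n) (cos t) = cos (a - t)" using 3(2) by (simp only: e2)
  have "poly (cheb (Suc (Suc n))) (cos t) = 2 * cos t * cos a - cos (a - t)"
    by (simp add: h1 h0)
  also have "\<dots> = cos (a + t)" by (simp add: cos_add cos_diff)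
  finally have "poly (cheb (Suc (Suc n))) (cos t) = cos (a + t)" .
  then show ?case by (simp only: e1)
qed

lemma cheb_complex:
  fixes z :: complex assumes "z \<noteq> 0"
  shows "2 * poly (cheb n) ((z + inverse z)/2) = z^n + inverse z ^ n"
proof (induction n rule: cheb.induct)
  case 1 then show ?case by simp
next
  case 2 then show ?case by simp
next
  case (3 n)
  have "2 * poly (cheb (Suc (Suc n))) ((z + inverse z)/2) =
        (z + inverse z) * (2 * poly (cheb (Suc n)) ((z + inverse z)/2)) - 2 * poly (cheb n) ((z + inverse z)/2)"
    by (simp add: algebra_simps)
  also have "\<dots> = (z + inverse z) * (z^Suc n + inverse z ^ Suc n) - (z^n + inverse z ^ n)"
    using 3 by simp
  also have "\<dots> = z^Suc (Suc n) + inverse z ^ Suc (Suc n)"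
    using assms by (simp add: field_simps power_Suc)
  finally show ?case .
qed

lemma coeff_cheb_gt: "n < k \<Longrightarrow> coeff (cheb n) k = 0"
proof (induction n arbitrary: k rule: cheb.induct)
  case 1 then show ?case by (simp add: coeff_1)
next
  case 2 then show ?case by (cases k) (auto simp: coeff_pCons split: nat.split)
next
  case (3 n)
  then show ?case by (cases k) (auto simp: coeff_pCons)
qed

lemma coeff_cheb_top: "coeff (cheb (Suc n)) (Suc n) = (2::'a::comm_ring_1) ^ n"
proof (induction n rule: nat_less_induct)
  case (1 n)
  show ?case
  proof (cases n)
    case 0 then show ?thesis by simp
  next
    case (Suc m)
    have "coeff (cheb (Suc (Suc m))) (Suc (Suc m)) = 2 * coeff (cheb (Suc m)) (Suc m) - coeff (cheb m) (Suc (Suc m))"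
      by simp
    also have "coeff (cheb m) (Suc (Suc m)) = (0::'a)" by (rule coeff_cheb_gt) simp
    finally show ?thesis using 1 Suc by simp
  qed
qed

lemma map_cheb: "map_poly complex_of_real (cheb n) = cheb n"
  by (induction n rule: cheb.induct) (auto simp: poly_eq_iff coeff_map_poly coeff_pCons split: nat.split)

lemma map_Q: "map_poly complex_of_real (Q n) = Q n"
proof -
  have "map_poly complex_of_real (Q n) = smult 2 (map_poly complex_of_real (cheb n)) + Fp"
    unfolding Q_def Fp_def by (simp add: poly_eq_iff coeff_map_poly coeff_pCons split: nat.split)
  then show ?thesis by (simp add: map_cheb Q_def)
qed

lemma pderiv_map_of_real: "pderiv (map_poly complex_of_real p) = map_poly complex_of_real (pderiv p)"
  by (simp add: poly_eq_iff coeff_map_poly coeff_pderiv)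

lemma poly_map_of_real: "poly (map_poly complex_of_real p) (complex_of_real t) = complex_of_real (poly p t)"
  by (induction p) (auto simp: map_poly_pCons)

lemma order_map_of_real:
  fixes p :: "real poly"
  assumes "p \<noteq> 0"
  shows "order (complex_of_real t) (map_poly complex_of_real p) = order t p"
  using assms
proof (induction "degree p" arbitrary: p rule: less_induct)
  case less
  have nz: "map_poly complex_of_real p \<noteq> 0" using less.prems by (simp add: map_poly_eq_0_iff)
  show ?case
  proof (cases "poly p t = 0")
    case False
    then show ?thesis by (simp add: order_0I poly_map_of_real)
  next
    case True
    have pd: "pderiv p \<noteq> 0"
    proof
      assume "pderiv p = 0"
      then obtain c where "p = [:c:]" using pderiv_iszero by blast
      with True less.prems show False by simp
    qed
    have "degree p \<noteq> 0"
    proof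
      assume "degree p = 0"
      then obtain c where "p = [:c:]" using degree_eq_zeroE by blast
      with pd show False by simp
    qed
    then have dl: "degree (pderiv p) < degree p" by (simp add: degree_pderiv)
    have "order t p = Suc (order t (pderiv p))" using order_pderiv[OF less.prems True] .
    moreover have "order (complex_of_real t) (map_poly complex_of_real p)
        = Suc (order (complex_of_real t) (pderiv (map_poly complex_of_real p)))"
      by (rule order_pderiv[OF nz]) (simp add: poly_map_of_real True)
    moreover have "order (complex_of_real t) (pderiv (map_poly complex_of_real p)) = order t (pderiv p)"
      unfolding pderiv_map_of_real by (rule less.hyps[OF dl pd])
    ultimately show ?thesis by simp
  qed
qed


lemma coeff_Q_gt: "n < k \<Longrightarrow> 4 < n \<Longrightarrow> coeff (Q n :: 'a::comm_ring_1 poly) k = 0"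
  by (simp add: Q_def Fp_def coeff_cheb_gt coeff_pCons split: nat.split)

lemma coeff_Q_top: "4 < n \<Longrightarrow> coeff (Q n :: 'a::{comm_ring_1} poly) n = 2 ^ n"
proof -
  assume n: "4 < n"
  then obtain m where m: "n = Suc m" by (cases n) auto
  have "coeff (Fp :: 'a poly) n = 0" using n by (simp add: Fp_def coeff_pCons split: nat.split)
  then show ?thesis using coeff_cheb_top[of m, where 'a='a] by (simp add: Q_def m)
qed

lemma degree_Q: "4 < n \<Longrightarrow> degree (Q n :: 'a::{comm_ring_1,ring_char_0} poly) = n"
proof -
  assume n: "4 < n"
  have "coeff (Q n :: 'a poly) n \<noteq> 0" using coeff_Q_top[OF n]
    by (metis of_nat_eq_0_iff of_nat_numeral of_nat_power power_not_zero zero_neq_numeral)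
  moreover have "degree (Q n :: 'a poly) \<le> n" using coeff_Q_gt[OF _ n] by (meson degree_le)
  ultimately show ?thesis by (meson le_antisym le_degree)
qed

lemma lead_Q: "4 < n \<Longrightarrow> lead_coeff (Q n :: 'a::{comm_ring_1,ring_char_0} poly) = 2 ^ n"
  by (simp add: degree_Q coeff_Q_top)

lemma Q_nz: "4 < n \<Longrightarrow> (Q n :: 'a::{comm_ring_1,ring_char_0} poly) \<noteq> 0"
  using lead_Q[of n, where 'a='a] by (metis leading_coeff_0_iff of_nat_eq_0_iff of_nat_numeral of_nat_power power_not_zero zero_neq_numeral)

lemma poly_Fp: "poly Fp y = 1 - 12*y^2 + 16*(y::'a::comm_ring_1)^4"
  by (simp add: Fp_def algebra_simps eval_nat_numeral)

lemma Fp_z: "z * (w::complex) = 1 \<Longrightarrow> poly Fp ((z+w)/2) = z^4+z^2+1+w^2+w^4"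
proof -
  assume h: "z*w = 1"
  have "poly Fp ((z+w)/2) = 1 - 3*(z+w)^2 + (z+w)^4"
    by (simp add: poly_Fp power_divide)
  also have "\<dots> = z^4+z^2+1+w^2+w^4" using h by algebra
  finally show ?thesis .
qed

lemma P_eval:
  fixes z :: complex assumes "z \<noteq> 0" "4 < n"
  shows "poly (P2n n) z = z ^ n * poly (Q n) ((z + inverse z)/2)"
proof -
  obtain m where m: "n = m + 4" using assms(2) by (metis add.commute less_imp_add_positive)
  have c: "2 * poly (cheb n) ((z + inverse z)/2) = z^n + inverse z ^ n" by (rule cheb_complex[OF assms(1)])
  have "poly (Q n) ((z + inverse z)/2) = (z^n + inverse z ^ n) + poly Fp ((z + inverse z)/2)"
    unfolding Q_def using c by simp
  also have "poly Fp ((z + inverse z)/2) = z^4 + z^2 + 1 + inverse z ^ 2 + inverse z ^ 4"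
    using assms(1) by (intro Fp_z) simp
  finally have e: "poly (Q n) ((z + inverse z)/2) = z^n + inverse z ^ n + (z^4 + z^2 + 1 + inverse z ^ 2 + inverse z ^ 4)" .
  have n2: "n - 2 = m + 2" "n - 4 = m" "2 * n = m + m + 8" "n + 4 = m + 8" "n + 2 = m + 6" using m by auto
  have zz: "z^(m*2) = z^m*z^m" by (simp add: power_mult power2_eq_square)
  show ?thesis unfolding e P2n_def using assms(1)
    by (simp add: poly_monom n2 m field_simps power_add zz) (simp add: eval_nat_numeral)
qed


definition quad :: "complex \<Rightarrow> complex poly" where "quad x = [:1, -2*x, 1:]"

lemma prod_mset_mult_const: "(\<Prod>x\<in>#R. c * f x) = c ^ size R * (\<Prod>x\<in>#R. (f x :: 'a::comm_monoid_mult))"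
  by (induction R) (auto simp: algebra_simps)

lemma poly_eq_nonzero:
  fixes p q :: "complex poly"
  assumes "\<And>z. z \<noteq> 0 \<Longrightarrow> poly p z = poly q z"
  shows "p = q"
proof (rule ccontr)
  assume "p \<noteq> q"
  then have "p - q \<noteq> 0" by simp
  then have "finite {z. poly (p - q) z = 0}" by (rule poly_roots_finite)
  moreover have "UNIV - {0} \<subseteq> {z. poly (p - q) z = 0}" using assms by auto
  ultimately have "finite (UNIV - {0::complex})" by (rule rev_finite_subset)
  then show False by (simp add: infinite_UNIV_char_0)
qed

lemma P_factor:
  assumes n: "4 < n"
  shows "P2n n = (\<Prod>x\<in>#proots (Q n). quad x)"
proof (rule poly_eq_nonzero)
  fix z :: complex assume z: "z \<noteq> 0"
  define R where "R = proots (Q n :: complex poly)"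
  have sR: "size R = n" unfolding R_def by (simp add: size_proots_complex degree_Q n)
  have dec: "smult (lead_coeff (Q n)) (\<Prod>x\<in>#R. [:-x, 1:]) = (Q n :: complex poly)"
    unfolding R_def by (rule complex_poly_decompose_multiset)
  have "poly (Q n) ((z + inverse z)/2) = 2^n * (\<Prod>x\<in>#R. ((z + inverse z)/2 - x))"
    by (subst dec[symmetric]) (simp add: lead_Q n poly_prod_mset)
  then have "poly (P2n n) z = (2*z)^n * (\<Prod>x\<in>#R. ((z + inverse z)/2 - x))"
    using P_eval[OF z n] by (simp add: power_mult_distrib)
  also have "\<dots> = (\<Prod>x\<in>#R. (2*z) * ((z + inverse z)/2 - x))"
    by (simp add: prod_mset_mult_const sR)
  also have "\<dots> = (\<Prod>x\<in>#R. poly (quad x) z)"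
    using z by (intro arg_cong[where f=prod_mset] image_mset_cong) (simp add: quad_def field_simps power2_eq_square)
  also have "\<dots> = poly (\<Prod>x\<in>#R. quad x) z" by (simp add: poly_prod_mset)
  finally show "poly (P2n n) z = poly (\<Prod>x\<in>#proots (Q n). quad x) z" unfolding R_def .
qed
lemma poly_quad: "poly (quad x) z = 1 - 2*x*z + z^2"
  by (simp add: quad_def algebra_simps power2_eq_square)

lemma quad_root_circle:
  assumes "-1 \<le> t" "t \<le> 1" "poly (quad (complex_of_real t)) z = 0"
  shows "cmod z = 1"
proof -
  define u v where "u = Re z" "v = Im z"
  have e: "1 - 2*complex_of_real t*z + z^2 = 0" using assms(3) by (simp add: poly_quad)
  have re: "1 - 2*t*u + u^2 - v^2 = 0" using arg_cong[OF e, of Re]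
    by (simp add: u_v_def power2_eq_square)
  have im: "v * (u - t) = 0" using arg_cong[OF e, of Im]
    by (simp add: u_v_def power2_eq_square algebra_simps)
  have "u^2 + v^2 = 1"
  proof (cases "v = 0")
    case True
    then have "(u - t)^2 = t^2 - 1" using re by (simp add: power2_eq_square algebra_simps)
    moreover have "t^2 \<le> 1" using assms(1,2) abs_square_le_1[of t] by simp
    moreover have "(u-t)^2 \<ge> 0" by simp
    ultimately have "(u-t)^2 = 0" "t^2 = 1" by linarith+
    then show ?thesis using True by simp
  next
    case False
    then have "u = t" using im by simp
    then show ?thesis using re by (simp add: power2_eq_square algebra_simps)
  qed
  then show ?thesis by (simp add: cmod_def u_v_def)
qed

lemma quad_root_off:
  assumes "poly (quad x) z = 0" "cmod z = 1"
  shows "x \<in> complex_of_real ` {-1..1}"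
proof -
  have z: "z \<noteq> 0" using assms(2) by auto
  have e: "1 - 2*x*z + z^2 = 0" using assms(1) by (simp add: poly_quad)
  have "z * cnj z = 1" using assms(2) complex_norm_square[of z] by simp
  then have ic: "inverse z = cnj z" by (rule inverse_unique)
  have "x = (z + inverse z) / 2" using e z by (simp add: field_simps power2_eq_square)
  also have "\<dots> = complex_of_real (Re z)" unfolding ic by (simp add: complex_add_cnj)
  finally have "x = complex_of_real (Re z)" .
  moreover have "\<bar>Re z\<bar> \<le> 1" using abs_Re_le_cmod[of z] assms(2) by simp
  ultimately show ?thesis by (intro image_eqI[of _ _ "Re z"]) (auto simp: abs_le_iff)
qed

lemma quad_nz: "quad x \<noteq> 0" by (simp add: quad_def)
lemma degree_quad: "degree (quad x) = 2" by (simp add: quad_def)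

lemma size_filter_proots:
  assumes "p \<noteq> 0"
  shows "size (filter_mset \<Phi> (proots p)) = (\<Sum>z\<in>{z. poly p z = 0 \<and> \<Phi> z}. order z p)"
proof -
  have "size (filter_mset \<Phi> (proots p)) = sum (count (filter_mset \<Phi> (proots p))) (set_mset (filter_mset \<Phi> (proots p)))"
    by (rule size_multiset_overloaded_eq)
  also have "set_mset (filter_mset \<Phi> (proots p)) = {z. poly p z = 0 \<and> \<Phi> z}"
    using assms by auto
  also have "sum (count (filter_mset \<Phi> (proots p))) {z. poly p z = 0 \<and> \<Phi> z} = (\<Sum>z\<in>{z. poly p z = 0 \<and> \<Phi> z}. order z p)"
    using assms by (intro sum.cong) auto
  finally show ?thesis .
qed

lemma size_filter_sum_mset:
  "size (filter_mset \<Phi> (\<Sum>x\<in>#A. f x)) = (\<Sum>x\<in>#A. size (filter_mset \<Phi> (f x)))"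
  by (induction A) (auto simp: filter_union_mset)

lemma size_sum_mset_image: "size (\<Sum>x\<in>#A. f x) = (\<Sum>x\<in>#A. size (f x :: 'a multiset))"
  by (induction A) auto

definition SI :: "complex set" where "SI = complex_of_real ` {-1..1}"

lemma quad_count:
  "size (filter_mset (\<lambda>z. cmod z \<noteq> 1) (proots (quad x))) = (if x \<in> SI then 0 else 2)"
proof (cases "x \<in> SI")
  case True
  then obtain t where t: "-1 \<le> t" "t \<le> 1" "x = complex_of_real t" unfolding SI_def by auto
  have "filter_mset (\<lambda>z. cmod z \<noteq> 1) (proots (quad x)) = {#}"
    unfolding filter_mset_eq_mempty_iff using quad_root_circle[OF t(1,2)] t(3) quad_nz by auto
  then show ?thesis using True by simp
next
  case False
  have "filter_mset (\<lambda>z. cmod z \<noteq> 1) (proots (quad x)) = proots (quad x)"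
    using quad_root_off False quad_nz unfolding SI_def by (auto simp: filter_mset_eq_conv)
  then show ?thesis using False by (simp add: size_proots_complex degree_quad)
qed

definition NR :: "nat \<Rightarrow> nat" where
  "NR n = (\<Sum>t\<in>{t. poly (Q n :: real poly) t = 0 \<and> -1 \<le> t \<and> t \<le> 1}. order t (Q n))"

lemma NR_eq:
  assumes n: "4 < n"
  shows "size (filter_mset (\<lambda>x. x \<in> SI) (proots (Q n :: complex poly))) = NR n"
proof -
  have nzc: "(Q n :: complex poly) \<noteq> 0" by (rule Q_nz[OF n])
  have nzr: "(Q n :: real poly) \<noteq> 0" by (rule Q_nz[OF n])
  have "size (filter_mset (\<lambda>x. x \<in> SI) (proots (Q n :: complex poly))) =
     (\<Sum>z\<in>{z. poly (Q n :: complex poly) z = 0 \<and> z \<in> SI}. order z (Q n))"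
    by (rule size_filter_proots[OF nzc])
  also have "{z. poly (Q n :: complex poly) z = 0 \<and> z \<in> SI} =
      complex_of_real ` {t. poly (Q n :: real poly) t = 0 \<and> -1 \<le> t \<and> t \<le> 1}"
    unfolding SI_def using poly_map_of_real[of "Q n"] by (auto simp: map_Q)
  also have "(\<Sum>z\<in>complex_of_real ` {t. poly (Q n :: real poly) t = 0 \<and> -1 \<le> t \<and> t \<le> 1}. order z (Q n)) =
      (\<Sum>t\<in>{t. poly (Q n :: real poly) t = 0 \<and> -1 \<le> t \<and> t \<le> 1}. order (complex_of_real t) (Q n))"
    by (subst sum.reindex) (auto simp: inj_on_def)
  also have "\<dots> = NR n" unfolding NR_def
    using order_map_of_real[OF nzr] by (simp add: map_Q)
  finally show ?thesis .
qed

lemma C_formula: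
  assumes n: "4 < n"
  shows "C_ratio (P2n n) = 1 - real (NR n) / real n"
proof -
  define R where "R = proots (Q n :: complex poly)"
  have sR: "size R = n" unfolding R_def by (simp add: size_proots_complex degree_Q n)
  have PF: "P2n n = (\<Prod>x\<in>#R. quad x)" unfolding R_def by (rule P_factor[OF n])
  have PR: "proots (P2n n) = (\<Sum>x\<in>#R. proots (quad x))"
  proof -
    have h: "0 \<notin># image_mset quad R" using quad_nz by auto
    show ?thesis unfolding PF using proots_prod_mset[OF h] by (simp add: image_mset.compositionality o_def)
  qed
  have Pnz: "P2n n \<noteq> 0" unfolding PF by (auto simp: prod_mset_zero_iff quad_nz)
  have deg: "degree (P2n n) = 2 * n"
  proof -
    have "degree (P2n n) = size (proots (P2n n))" by (simp add: size_proots_complex)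
    also have "\<dots> = (\<Sum>x\<in>#R. size (proots (quad x)))" unfolding PR by (simp add: size_sum_mset_image image_mset.compositionality o_def)
    also have "\<dots> = (\<Sum>x\<in>#R. 2)" by (simp add: size_proots_complex degree_quad)
    also have "\<dots> = 2 * n" using sR by (simp add: sum_mset_constant)
    finally show ?thesis .
  qed
  have "zeros_inside (P2n n) + zeros_outside (P2n n) =
      size (filter_mset (\<lambda>z. cmod z < 1) (proots (P2n n))) + size (filter_mset (\<lambda>z. cmod z > 1) (proots (P2n n)))"
    unfolding zeros_inside_def zeros_outside_def using size_filter_proots[OF Pnz] by simp
  also have "\<dots> = size (filter_mset (\<lambda>z. cmod z \<noteq> 1) (proots (P2n n)))"
  proof -
    have "filter_mset (\<lambda>z. cmod z < 1) (proots (P2n n)) + filter_mset (\<lambda>z. cmod z > 1) (proots (P2n n))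
        = filter_mset (\<lambda>z. cmod z \<noteq> 1) (proots (P2n n))"
      by (rule multiset_eqI) auto
    then show ?thesis by (metis size_union)
  qed
  also have "\<dots> = (\<Sum>x\<in>#R. (if x \<in> SI then 0 else 2))"
    unfolding PR size_filter_sum_mset quad_count ..
  also have "\<dots> = 2 * size (filter_mset (\<lambda>x. x \<notin> SI) R)"
    by (induction R) auto
  also have "size (filter_mset (\<lambda>x. x \<notin> SI) R) = n - NR n"
  proof -
    have "R = filter_mset (\<lambda>x. x \<in> SI) R + filter_mset (\<lambda>x. x \<notin> SI) R"
      by (rule multiset_partition)
    then have "size R = size (filter_mset (\<lambda>x. x \<in> SI) R) + size (filter_mset (\<lambda>x. x \<notin> SI) R)"
      by (metis size_union)
    then show ?thesis using NR_eq[OF n] sR unfolding R_def by simp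
  qed
  finally have IE: "zeros_inside (P2n n) + zeros_outside (P2n n) = 2 * (n - NR n)" .
  have "NR n \<le> n" using NR_eq[OF n] sR size_filter_mset_lesseq[of _ R] unfolding R_def by metis
  then show ?thesis unfolding C_ratio_def IE deg using n by (simp add: field_simps of_nat_diff)
qed


lemma cheb_D1: "poly (pderiv (cheb n)) (cos t) * sin t = real n * sin (real n * t)"
proof -
  have d1: "((\<lambda>t. poly (cheb n) (cos t)) has_real_derivative (poly (pderiv (cheb n)) (cos t) * - sin t)) (at t)"
    by (rule DERIV_chain2[OF poly_DERIV DERIV_cos])
  have d2: "((\<lambda>t. cos (real n * t)) has_real_derivative (- sin (real n * t) * real n)) (at t)"
    by (auto intro!: derivative_eq_intros)
  have "(\<lambda>t. poly (cheb n) (cos t)) = (\<lambda>t. cos (real n * t))" by (simp add: cheb_cos)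
  with d1 have d1': "((\<lambda>t. cos (real n * t)) has_real_derivative (poly (pderiv (cheb n)) (cos t) * - sin t)) (at t)" by simp
  from DERIV_unique[OF d1' d2] show ?thesis by simp
qed

lemma cheb_D2: "poly (pderiv (pderiv (cheb n))) (cos t) * (sin t)^2 =
   cos t * poly (pderiv (cheb n)) (cos t) - (real n)^2 * cos (real n * t)"
proof -
  have d1: "((\<lambda>t. poly (pderiv (cheb n)) (cos t) * sin t) has_real_derivative
      (poly (pderiv (pderiv (cheb n))) (cos t) * - sin t * sin t + cos t * poly (pderiv (cheb n)) (cos t))) (at t)"
    by (rule DERIV_mult[OF DERIV_chain2[OF poly_DERIV DERIV_cos] DERIV_sin])
  have d2: "((\<lambda>t. real n * sin (real n * t)) has_real_derivative (real n * (cos (real n * t) * real n))) (at t)"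
    by (auto intro!: derivative_eq_intros)
  have "(\<lambda>t. poly (pderiv (cheb n)) (cos t) * sin t) = (\<lambda>t. real n * sin (real n * t))" by (simp add: cheb_D1)
  with d1 have d1': "((\<lambda>t. real n * sin (real n * t)) has_real_derivative
      (poly (pderiv (pderiv (cheb n))) (cos t) * - sin t * sin t + cos t * poly (pderiv (cheb n)) (cos t))) (at t)" by simp
  from DERIV_unique[OF d1' d2] show ?thesis by (simp add: power2_eq_square algebra_simps)
qed

lemma Q_cos: "poly (Q n) (cos t) = 2 * cos (real n * t) + poly Fp (cos t)"
  by (simp add: Q_def cheb_cos)

lemma Q_D1: "poly (pderiv (Q n)) (cos t) * sin t = 2 * real n * sin (real n * t) + poly (pderiv Fp) (cos t) * sin t"
  using cheb_D1[of n t] by (simp add: Q_def pderiv_add pderiv_smult algebra_simps)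

lemma Q_D2: "poly (pderiv (pderiv (Q n))) (cos t) * (sin t)^2 =
   2 * (cos t * poly (pderiv (cheb n)) (cos t) - (real n)^2 * cos (real n * t)) + poly (pderiv (pderiv Fp)) (cos t) * (sin t)^2"
  using cheb_D2[of n t] by (simp add: Q_def pderiv_add pderiv_smult algebra_simps)

lemma Fp_D1: "poly (pderiv Fp) x = 64 * x^3 - 24 * (x::real)"
  by (simp add: Fp_def pderiv_pCons algebra_simps eval_nat_numeral)
lemma Fp_D2: "poly (pderiv (pderiv Fp)) x = 192 * x^2 - (24::real)"
  by (simp add: Fp_def pderiv_pCons algebra_simps eval_nat_numeral)

lemma Fp_D1_bound: "\<bar>x\<bar> \<le> 1 \<Longrightarrow> \<bar>poly (pderiv Fp) x\<bar> \<le> (88::real)"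
proof -
  assume x: "\<bar>x\<bar> \<le> 1"
  have "\<bar>x\<bar>^3 \<le> 1" using x by (intro power_le_one) auto
  then have x3: "\<bar>x^3\<bar> \<le> 1" by (simp add: power_abs)
  have "\<bar>64 * x^3 - 24*x\<bar> \<le> \<bar>64*x^3\<bar> + \<bar>24*x\<bar>" by (rule abs_triangle_ineq4)
  then show ?thesis unfolding Fp_D1 using x x3 by (simp add: abs_mult)
qed

lemma Fp_D2_bound: "\<bar>x\<bar> \<le> 1 \<Longrightarrow> \<bar>poly (pderiv (pderiv Fp)) x\<bar> \<le> (216::real)"
proof -
  assume x: "\<bar>x\<bar> \<le> 1"
  have h1: "x^2 \<le> 1" using x abs_square_le_1 by auto
  have h0: "x^2 \<ge> 0" by simp
  show ?thesis unfolding Fp_D2 abs_le_iff using h0 h1 by linarith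
qed

definition a2 :: real where "a2 = (3 + sqrt 13) / 8"

lemma Fp_minus2: "poly Fp x - 2 = 16 * (x^2 - a2) * (x^2 - (3 - sqrt 13)/8)"
proof -
  define r where "r = (3 - sqrt 13)/8"
  have s: "sqrt 13 * sqrt 13 = (13::real)" by simp
  have h1: "a2 + r = 3/4" by (simp add: a2_def r_def field_simps)
  have h2: "a2 * r = -1/16" by (simp add: a2_def r_def field_simps s)
  have "16 * (x^2 - a2) * (x^2 - r) = 16 * x^4 - 16 * (a2 + r) * x^2 + 16 * (a2 * r)"
    by (simp add: algebra_simps power2_eq_square eval_nat_numeral)
  also have "\<dots> = poly Fp x - 2" unfolding h1 h2 poly_Fp by simp
  finally show ?thesis by (simp add: r_def)
qed

lemma sqrt13: "3.6 \<le> sqrt (13::real)" "sqrt (13::real) \<le> 3.7"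
proof -
  have "sqrt ((36/10)^2) \<le> sqrt (13::real)" by (rule real_sqrt_le_mono) (simp add: power2_eq_square)
  then show "3.6 \<le> sqrt (13::real)" by simp
  have "sqrt (13::real) \<le> sqrt ((37/10)^2)" by (rule real_sqrt_le_mono) (simp add: power2_eq_square)
  then show "sqrt (13::real) \<le> 3.7" by simp
qed

lemma Fp_gt2: "a2 < x^2 \<Longrightarrow> 2 < poly Fp (x::real)"
proof -
  assume h: "a2 < x^2"
  have "0 < 16 * (x^2 - a2) * (x^2 - (3 - sqrt 13)/8)"
    using h sqrt13 by (intro mult_pos_pos) (auto simp: a2_def)
  then show ?thesis using Fp_minus2[of x] by linarith
qed

lemma Fp_le: "x^2 \<le> a2 \<Longrightarrow> poly Fp (x::real) \<le> 2 - 6/5 * (a2 - x^2)"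
proof -
  assume h: "x^2 \<le> a2"
  have e: "16 * (x^2 - (3 - sqrt 13)/8) = 16*x^2 - 6 + 2 * sqrt 13" by (simp add: field_simps)
  have "x^2 \<ge> 0" by simp
  then have K: "16 * (x^2 - (3 - sqrt 13)/8) \<ge> 6/5" unfolding e using sqrt13 by linarith
  have "(x^2 - a2) * (16 * (x^2 - (3 - sqrt 13)/8)) \<le> (x^2 - a2) * (6/5)"
    by (rule mult_left_mono_neg[OF K]) (use h in simp)
  moreover have "(x^2 - a2) * (16 * (x^2 - (3 - sqrt 13)/8)) = 16 * (x^2 - a2) * (x^2 - (3 - sqrt 13)/8)"
    by (simp only: mult.left_commute mult.assoc)
  moreover have "(x^2 - a2) * (6/5) = - 6/5 * (a2 - x^2)" by (simp add: field_simps)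
  ultimately have "16 * (x^2 - a2) * (x^2 - (3 - sqrt 13)/8) \<le> - 6/5 * (a2 - x^2)"
    by linarith
  then show ?thesis using Fp_minus2[of x] by linarith
qed

lemma Fp_ge: "poly Fp (x::real) \<ge> - 5/4"
proof -
  have "poly Fp x + 5/4 = (4*x^2 - 3/2)^2" by (simp add: poly_Fp power2_eq_square algebra_simps eval_nat_numeral)
  moreover have "(4*x^2 - 3/2)^2 \<ge> 0" by simp
  ultimately show ?thesis by linarith
qed


definition cnt :: "real poly \<Rightarrow> real \<Rightarrow> real \<Rightarrow> nat" where
  "cnt p u v = (\<Sum>x\<in>{x. poly p x = 0 \<and> u \<le> x \<and> x \<le> v}. order x p)"

lemma cnt_finite: fixes p :: "real poly" assumes "p \<noteq> 0" shows "finite {x. poly p x = 0 \<and> u \<le> x \<and> x \<le> v}"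
  by (rule rev_finite_subset[OF poly_roots_finite[OF assms]]) auto

lemma cnt_split:
  assumes "p \<noteq> 0" "v \<le> w" "u \<le> v"
  shows "cnt p u w \<le> cnt p u v + cnt p v w"
proof -
  let ?A = "{x. poly p x = 0 \<and> u \<le> x \<and> x \<le> v}"
  let ?B = "{x. poly p x = 0 \<and> v \<le> x \<and> x \<le> w}"
  have e: "{x. poly p x = 0 \<and> u \<le> x \<and> x \<le> w} = ?A \<union> ?B" using assms by auto
  have "sum (\<lambda>x. order x p) (?A \<union> ?B) + sum (\<lambda>x. order x p) (?A \<inter> ?B) = sum (\<lambda>x. order x p) ?A + sum (\<lambda>x. order x p) ?B"
    by (rule sum.union_inter) (use cnt_finite[OF assms(1)] in auto)
  then show ?thesis unfolding cnt_def e by linarith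
qed

lemma cnt_zero:
  assumes "\<And>x. u \<le> x \<Longrightarrow> x \<le> v \<Longrightarrow> poly p x \<noteq> 0"
  shows "cnt p u v = 0"
proof -
  have e: "{x. poly p x = 0 \<and> u \<le> x \<and> x \<le> v} = {}" using assms by auto
  show ?thesis unfolding cnt_def e by simp
qed

lemma order_root_deriv:
  fixes p :: "real poly"
  assumes "p \<noteq> 0" "poly p x = 0" "poly (pderiv p) x \<noteq> 0"
  shows "order x p = 1"
  using order_pderiv[OF assms(1,2)] order_0I[OF assms(3)] by simp

lemma order_le2:
  fixes p :: "real poly"
  assumes "p \<noteq> 0" "poly p x = 0" "poly (pderiv (pderiv p)) x \<noteq> 0"
  shows "order x p \<le> 2" "order x p = 2 \<Longrightarrow> poly (pderiv p) x = 0"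
proof -
  show "order x p = 2 \<Longrightarrow> poly (pderiv p) x = 0" using order_root_deriv[OF assms(1,2)] by auto
  show "order x p \<le> 2"
  proof (cases "poly (pderiv p) x = 0")
    case False then show ?thesis using order_root_deriv[OF assms(1,2)] by simp
  next
    case True
    have "pderiv p \<noteq> 0" using assms(3) by auto
    then show ?thesis using order_pderiv[OF assms(1,2)] order_pderiv[OF _ True] order_0I[OF assms(3)] by simp
  qed
qed

lemma rolle_poly:
  fixes p :: "real poly"
  assumes "x < y" "poly p x = 0" "poly p y = 0"
  shows "\<exists>c. x < c \<and> c < y \<and> poly (pderiv p) c = 0"
  using poly_MVT[OF assms(1), of p] assms by auto

lemma cnt_le1:
  assumes p: "p \<noteq> 0" and d: "\<And>x. u \<le> x \<Longrightarrow> x \<le> v \<Longrightarrow> poly (pderiv p) x \<noteq> 0"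
  shows "cnt p u v \<le> 1"
proof -
  let ?S = "{x. poly p x = 0 \<and> u \<le> x \<and> x \<le> v}"
  have fin: "finite ?S" by (rule cnt_finite[OF p])
  have "cnt p u v = (\<Sum>x\<in>?S. 1)" unfolding cnt_def
    using order_root_deriv[OF p] d by (intro sum.cong) auto
  also have "\<dots> = card ?S" by simp
  also have "card ?S \<le> 1"
  proof -
    have "\<forall>a\<in>?S. \<forall>b\<in>?S. a = b"
    proof (intro ballI, rule ccontr)
      fix a b assume ab: "a \<in> ?S" "b \<in> ?S" "a \<noteq> b"
      have "\<exists>c. min a b < c \<and> c < max a b \<and> poly (pderiv p) c = 0"
        using ab by (intro rolle_poly) (auto simp: min_def max_def)
      then show False using d ab by (auto simp: min_def max_def split: if_splits)
    qed
    then show ?thesis using card_le_Suc0_iff_eq[OF fin] by simp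
  qed
  finally show ?thesis .
qed

lemma cnt_le2:
  assumes p: "p \<noteq> 0" and d: "\<And>x. u \<le> x \<Longrightarrow> x \<le> v \<Longrightarrow> poly (pderiv (pderiv p)) x > 0"
  shows "cnt p u v \<le> 2"
proof -
  let ?S = "{x. poly p x = 0 \<and> u \<le> x \<and> x \<le> v}"
  have fin: "finite ?S" by (rule cnt_finite[OF p])
  have uniq: "a = b" if "u \<le> a" "a \<le> v" "u \<le> b" "b \<le> v" "poly (pderiv p) a = 0" "poly (pderiv p) b = 0" for a b
  proof (rule ccontr)
    assume "a \<noteq> b"
    then have "\<exists>c. min a b < c \<and> c < max a b \<and> poly (pderiv (pderiv p)) c = 0"
      using that by (intro rolle_poly) (auto simp: min_def max_def)
    then obtain c where c: "min a b < c" "c < max a b" "poly (pderiv (pderiv p)) c = 0" by blast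
    have "u \<le> c" "c \<le> v" using c that by (auto simp: min_def max_def split: if_splits)
    then show False using d[of c] c by simp
  qed
  show ?thesis
  proof (cases "?S = {}")
    case True then show ?thesis unfolding cnt_def True by simp
  next
    case False
    define m where "m = Min ?S"
    define M where "M = Max ?S"
    have mS: "m \<in> ?S" unfolding m_def using Min_in[OF fin False] .
    have MS: "M \<in> ?S" unfolding M_def using Max_in[OF fin False] .
    have bnd: "m \<le> w \<and> w \<le> M" if "w \<in> ?S" for w
      using that fin unfolding m_def M_def by auto
    have o2: "order w p \<le> 2" if "w \<in> ?S" for w
      using order_le2(1)[OF p] that d[of w] by auto
    show ?thesis
    proof (cases "m = M")
      case True
      then have "?S = {m}" using bnd mS by force
      then show ?thesis unfolding cnt_def using o2 mS by simp
    next
      case False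
      then have mM: "m < M" using bnd[OF MS] by simp
      obtain c where c: "m < c" "c < M" "poly (pderiv p) c = 0"
        using rolle_poly[OF mM] mS MS by auto
      have cuv: "u \<le> c" "c \<le> v" using c mS MS by auto
      have "?S = {m, M}"
      proof (rule ccontr)
        assume "?S \<noteq> {m, M}"
        then obtain w where w: "w \<in> ?S" "w \<noteq> m" "w \<noteq> M" using mS MS by blast
        then have "m < w" "w < M" using bnd[OF w(1)] by auto
        then obtain c1 c2 where "m < c1" "c1 < w" "poly (pderiv p) c1 = 0"
           "w < c2" "c2 < M" "poly (pderiv p) c2 = 0"
          using rolle_poly[of m w p] rolle_poly[of w M p] mS MS w by auto
        moreover have "u \<le> c1" "c1 \<le> v" "u \<le> c2" "c2 \<le> v" using calculation mS MS w by auto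
        ultimately show False using uniq[of c1 c2] by auto
      qed
      moreover have "order m p = 1"
      proof (rule ccontr)
        assume "order m p \<noteq> 1"
        then have "order m p = 2" using o2[OF mS] mS p order_root[of p m] by auto
        then have "poly (pderiv p) m = 0" using order_le2(2)[OF p] mS d[of m] by auto
        then show False using uniq[OF _ _ cuv, of m] c mS by auto
      qed
      moreover have "order M p = 1"
      proof (rule ccontr)
        assume "order M p \<noteq> 1"
        then have "order M p = 2" using o2[OF MS] MS p order_root[of p M] by auto
        then have "poly (pderiv p) M = 0" using order_le2(2)[OF p] MS d[of M] by auto
        then show False using uniq[OF _ _ cuv, of M] c MS by auto
      qed
      ultimately show ?thesis unfolding cnt_def using mM by simp
    qed
  qed
qed


definition aa :: real where "aa = sqrt (3/8 + sqrt 13 / 8)"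
definition al :: real where "al = arccos aa"

lemma aa_sq: "aa^2 = a2"
  unfolding aa_def a2_def by (simp add: add_divide_distrib)

lemma aa_bounds: "0 < aa" "aa < 1"
proof -
  have "0 < 3/8 + sqrt 13 / (8::real)" using sqrt13 by simp
  then show "0 < aa" unfolding aa_def by simp
  have "a2 < 1" unfolding a2_def using sqrt13 by simp
  then have "aa^2 < 1^2" using aa_sq by simp
  then show "aa < 1" using \<open>0 < aa\<close> by (meson abs_less_iff power2_less_imp_less zero_le_one)
qed

lemma al_bounds: "0 < al" "al < pi/2" "cos al = aa"
proof -
  show "cos al = aa" unfolding al_def using aa_bounds by (simp add: cos_arccos)
  show "0 < al" unfolding al_def using aa_bounds arccos_lt_bounded[of aa] by simp
  have "al < pi" unfolding al_def using aa_bounds arccos_lt_bounded[of aa] by simp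
  show "al < pi/2"
  proof (rule ccontr)
    assume "\<not> al < pi/2"
    then have "cos al \<le> cos (pi/2)" using \<open>al < pi\<close> by (intro cos_monotone_0_pi_le) auto
    then show False using \<open>cos al = aa\<close> aa_bounds by simp
  qed
qed

lemma Q_x: "\<bar>x\<bar> \<le> 1 \<Longrightarrow> poly (Q n) x = 2 * cos (real n * arccos x) + poly Fp x"
  using Q_cos[of n "arccos x"] by (simp add: cos_arccos abs_le_iff)

lemma theta_of:
  assumes "0 \<le> ta" "ta \<le> tb" "tb \<le> pi" "cos tb \<le> x" "x \<le> cos ta"
  obtains t where "ta \<le> t" "t \<le> tb" "x = cos t"
proof -
  have x1: "-1 \<le> x" "x \<le> 1" using assms(4,5) cos_ge_minus_one[of tb] cos_le_one[of ta] by linarith+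
  have "arccos (cos ta) \<le> arccos x" by (rule arccos_le_arccos) (use x1 assms in auto)
  moreover have "arccos x \<le> arccos (cos tb)" by (rule arccos_le_arccos) (use x1 assms in auto)
  moreover have "arccos (cos ta) = ta" "arccos (cos tb) = tb" using assms by (auto intro!: arccos_cos)
  ultimately show ?thesis using that[of "arccos x"] x1 by (simp add: cos_arccos)
qed

lemma Fp_lt2: assumes "x^2 < a2" shows "poly Fp (x::real) < 2"
proof -
  have h: "poly Fp x \<le> 2 - 6/5*(a2 - x^2)" using Fp_le[of x] assms by simp
  have "6/5*(a2 - x^2) > 0" using assms by simp
  then show ?thesis using h by linarith
qed

lemma card_lower:
  assumes "0 \<le> A"
  shows "real (card {j::nat. A < real j \<and> real j < B}) \<ge> B - A - 1"
proof (cases "B - A - 1 \<le> 0")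
  case True then show ?thesis by simp
next
  case False
  define k0 where "k0 = nat \<lfloor>A\<rfloor> + 1"
  define k1 where "k1 = nat \<lceil>B\<rceil>"
  have fin: "finite {j::nat. A < real j \<and> real j < B}"
    by (rule finite_subset[of _ "{..<nat \<lceil>B\<rceil>}"]) (auto, linarith)
  have sub: "{k0..<k1} \<subseteq> {j::nat. A < real j \<and> real j < B}"
  proof
    fix j assume "j \<in> {k0..<k1}"
    then have "k0 \<le> j" "j < k1" by auto
    then show "j \<in> {j::nat. A < real j \<and> real j < B}" unfolding k0_def k1_def using assms
      by auto linarith+
  qed
  have "real (card {k0..<k1}) \<ge> B - A - 1"
    unfolding k0_def k1_def using assms False by simp linarith
  also have "card {k0..<k1} \<le> card {j::nat. A < real j \<and> real j < B}" by (rule card_mono[OF fin sub])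
  finally show ?thesis by simp
qed

lemma card_upper:
  assumes "A \<le> B"
  shows "real (card {j::nat. A \<le> real j \<and> real j \<le> B}) \<le> B - A + 1"
proof (cases "B < 0")
  case True
  then have e: "{j::nat. A \<le> real j \<and> real j \<le> B} = {}" by auto
  show ?thesis unfolding e using assms by simp
next
  case False
  have sub: "{j::nat. A \<le> real j \<and> real j \<le> B} \<subseteq> {nat \<lceil>A\<rceil>..nat \<lfloor>B\<rfloor>}"
    by auto linarith+
  have "card {j::nat. A \<le> real j \<and> real j \<le> B} \<le> card {nat \<lceil>A\<rceil>..nat \<lfloor>B\<rfloor>}"
    by (rule card_mono[OF _ sub]) simp
  also have "real (card {nat \<lceil>A\<rceil>..nat \<lfloor>B\<rfloor>}) \<le> B - A + 1"
    using False assms by (simp add: of_nat_diff) linarith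
  finally show ?thesis by simp
qed


lemma sq_lt_a2: assumes "al < t" "t < pi - al" shows "(cos t)^2 < a2"
proof -
  have "cos t < cos al" using assms al_bounds by (intro cos_monotone_0_pi) auto
  moreover have "cos (pi - al) < cos t" using assms al_bounds by (intro cos_monotone_0_pi) auto
  ultimately have "\<bar>cos t\<bar> < aa" using al_bounds by auto
  then have "\<bar>cos t\<bar>^2 < aa^2" by (intro power_strict_mono) auto
  then show ?thesis using aa_sq by simp
qed

lemma NR_lower:
  assumes n: "4 < n"
  shows "real (NR n) \<ge> real n * (1 - 2*al/pi) - 2"
proof -
  define G where "G = {j::nat. real n*al/pi < real j \<and> real j < real n*(pi - al)/pi - 1}"
  define S where "S = {x. poly (Q n :: real poly) x = 0 \<and> -1 \<le> x \<and> x \<le> 1}"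
  have nz: "(Q n :: real poly) \<noteq> 0" by (rule Q_nz[OF n])
  have npos: "0 < real n" using n by simp
  have cG: "real (card G) \<ge> real n * (1 - 2*al/pi) - 2"
  proof -
    have "real (card G) \<ge> (real n*(pi - al)/pi - 1) - real n*al/pi - 1"
      unfolding G_def by (rule card_lower) (use al_bounds in simp)
    moreover have "(real n*(pi - al)/pi - 1) - real n*al/pi - 1 = real n * (1 - 2*al/pi) - 2"
      by (simp add: field_simps)
    ultimately show ?thesis by simp
  qed
  have root: "\<exists>r. cos (real (Suc j) * pi / n) < r \<and> r < cos (real j * pi / n) \<and> poly (Q n) r = 0" if jG: "j \<in> G" for j
  proof -
    define t1 where "t1 = real j * pi / n"
    define t2 where "t2 = real (Suc j) * pi / n"
    have t1: "al < t1" using jG npos unfolding G_def t1_def by (simp add: field_simps)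
    have t2: "t2 < pi - al" using jG npos unfolding G_def t2_def by (simp add: field_simps)
    have t12: "t1 < t2" unfolding t1_def t2_def using npos by (simp add: divide_strict_right_mono)
    have c: "cos t2 < cos t1" using t1 t2 t12 al_bounds by (intro cos_monotone_0_pi) auto
    have F1: "poly Fp (cos t1) < 2" "poly Fp (cos t2) < 2"
      using sq_lt_a2[of t1] sq_lt_a2[of t2] t1 t2 t12 Fp_lt2 by auto
    have F2: "poly Fp (cos t1) > -2" "poly Fp (cos t2) > -2" using Fp_ge[of "cos t1"] Fp_ge[of "cos t2"] by auto
    have q1: "poly (Q n) (cos t1) = 2 * (-1)^j + poly Fp (cos t1)"
      unfolding Q_cos t1_def using npos by (simp add: cos_npi)
    have q2: "poly (Q n) (cos t2) = 2 * (-1)^Suc j + poly Fp (cos t2)"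
      unfolding Q_cos t2_def using npos by (simp add: cos_npi del: of_nat_Suc)
    have "poly (Q n) (cos t2) * poly (Q n) (cos t1) < 0"
    proof (cases "even j")
      case True
      then have "poly (Q n) (cos t2) < 0" "poly (Q n) (cos t1) > 0" using q1 q2 F1 F2 by auto
      then show ?thesis by (simp add: mult_neg_pos)
    next
      case False
      then have "poly (Q n) (cos t2) > 0" "poly (Q n) (cos t1) < 0" using q1 q2 F1 F2 by auto
      then show ?thesis by (simp add: mult_pos_neg)
    qed
    from poly_IVT[OF c this] show ?thesis unfolding t1_def t2_def by auto
  qed
  define r where "r j = (SOME r. cos (real (Suc j) * pi / n) < r \<and> r < cos (real j * pi / n) \<and> poly (Q n) r = 0)" for j
  have r: "cos (real (Suc j) * pi / n) < r j \<and> r j < cos (real j * pi / n) \<and> poly (Q n) (r j) = 0" if "j \<in> G" for j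
    unfolding r_def by (rule someI_ex[OF root[OF that]])
  have Gbound: "real (Suc j) \<le> real n" if "j \<in> G" for j
  proof -
    have "real j < real n*(pi - al)/pi - 1" using that unfolding G_def by simp
    also have "\<dots> \<le> real n - 1" using al_bounds npos by (simp add: field_simps)
    finally show ?thesis by simp
  qed
  have inj: "inj_on r G"
  proof (rule inj_onI, rule ccontr)
    fix j k assume jk: "j \<in> G" "k \<in> G" "r j = r k" "j \<noteq> k"
    have mono: "cos (real k * pi / n) \<le> cos (real (Suc j) * pi / n)" if "j < k" "j \<in> G" "k \<in> G" for j k
    proof (rule cos_monotone_0_pi_le)
      show "0 \<le> real (Suc j) * pi / n" using npos by simp
      show "real (Suc j) * pi / n \<le> real k * pi / n" using that npos by (simp add: divide_right_mono)
      have "real k \<le> real n" using Gbound[OF that(3)] by simp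
      then show "real k * pi / n \<le> pi" using npos by (simp add: field_simps)
    qed
    show False
    proof (cases "j < k")
      case True
      then show False using mono[OF True jk(1,2)] r[OF jk(1)] r[OF jk(2)] jk(3) by linarith
    next
      case False
      then have kj: "k < j" using jk(4) by simp
      show False using mono[OF kj jk(2,1)] r[OF jk(1)] r[OF jk(2)] jk(3) by linarith
    qed
  qed
  have sub: "r ` G \<subseteq> S"
  proof
    fix x assume "x \<in> r ` G"
    then obtain j where j: "j \<in> G" "x = r j" by auto
    have "-1 \<le> cos (real (Suc j) * pi / n)" "cos (real j * pi / n) \<le> 1" by auto
    moreover note r[OF j(1)]
    ultimately have "-1 \<le> r j" "r j \<le> 1" "poly (Q n) (r j) = 0" by linarith+
    then show "x \<in> S" using j(2) unfolding S_def by auto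
  qed
  have finS: "finite S" unfolding S_def by (rule cnt_finite[OF nz])
  have "card G = card (r ` G)" using card_image[OF inj] by simp
  also have "\<dots> \<le> card S" by (rule card_mono[OF finS sub])
  also have "card S = (\<Sum>x\<in>S. 1)" by simp
  also have "\<dots> \<le> (\<Sum>x\<in>S. order x (Q n))"
    using nz order_root[of "Q n"] unfolding S_def by (intro sum_mono) (auto simp: Suc_le_eq)
  also have "\<dots> = NR n" unfolding NR_def S_def ..
  finally show ?thesis using cG by linarith
qed


lemma sin_ge:
  assumes "0 \<le> p" "p \<le> pi/2" "p \<le> t" "t \<le> pi - p"
  shows "sin p \<le> sin t"
proof (cases "t \<le> pi/2")
  case True then show ?thesis using assms by (intro sin_monotone_2pi_le) auto
next
  case False
  have "sin p \<le> sin (pi - t)" using assms False by (intro sin_monotone_2pi_le) auto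
  then show ?thesis by simp
qed

lemma cos_add_npi: "cos (x + real j * pi) = (-1)^j * cos x"
  by (simp add: cos_add cos_npi sin_npi)

lemma sin_add_npi: "sin (x + real j * pi) = (-1)^j * sin x"
  by (simp add: sin_add cos_npi sin_npi)

lemma zero_window:
  assumes "0 < n" "0 \<le> ta" "ta \<le> tb" "tb \<le> pi" "tb < al \<or> pi - al < ta"
  shows "cnt (Q n) (cos tb) (cos ta) = 0"
proof (rule cnt_zero)
  fix x assume x: "cos tb \<le> x" "x \<le> cos ta"
  have "-1 \<le> cos tb" "cos ta \<le> 1" by simp_all
  then have "-1 \<le> x" "x \<le> 1" using x by linarith+
  then have x1: "\<bar>x\<bar> \<le> 1" by simp
  have "aa < \<bar>x\<bar>"
    using assms(5)
  proof
    assume "tb < al"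
    then have "cos al < cos tb" using assms al_bounds by (intro cos_monotone_0_pi) auto
    then show ?thesis using x al_bounds aa_bounds by auto
  next
    assume "pi - al < ta"
    then have "cos ta < cos (pi - al)" using assms al_bounds by (intro cos_monotone_0_pi) auto
    then show ?thesis using x al_bounds aa_bounds by auto
  qed
  then have "aa^2 < \<bar>x\<bar>^2" using aa_bounds by (intro power_strict_mono) auto
  then have "2 < poly Fp x" using aa_sq Fp_gt2 by simp
  moreover have "-1 \<le> cos (real n * arccos x)" by simp
  ultimately show "poly (Q n) x \<noteq> 0" using Q_x[OF x1, of n] by linarith
qed

lemma middle_bound:
  assumes n4: "4 < n" and ns0: "44 < real n * s0"
    and t: "0 \<le> t1" "t1 \<le> t2" "t2 \<le> pi"
    and s: "\<And>t. t1 \<le> t \<Longrightarrow> t \<le> t2 \<Longrightarrow> s0 \<le> \<bar>sin (real n * t)\<bar>"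
  shows "cnt (Q n) (cos t2) (cos t1) \<le> 1"
proof (rule cnt_le1[OF Q_nz[OF n4]])
  fix x assume x: "cos t2 \<le> x" "x \<le> cos t1"
  obtain t where tt: "t1 \<le> t" "t \<le> t2" "x = cos t" using theta_of[OF t x] by blast
  have e: "poly (pderiv (Q n)) (cos t) * sin t = 2 * real n * sin (real n * t) + poly (pderiv Fp) (cos t) * sin t"
    by (rule Q_D1)
  have b1: "\<bar>poly (pderiv Fp) (cos t) * sin t\<bar> \<le> 88"
  proof -
    have "\<bar>poly (pderiv Fp) (cos t)\<bar> \<le> 88" by (rule Fp_D1_bound) simp
    moreover have "\<bar>sin t\<bar> \<le> 1" by simp
    ultimately have "\<bar>poly (pderiv Fp) (cos t)\<bar> * \<bar>sin t\<bar> \<le> 88 * 1"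
      by (intro mult_mono) auto
    then show ?thesis by (simp add: abs_mult)
  qed
  have b2: "88 < \<bar>2 * real n * sin (real n * t)\<bar>"
  proof -
    have "real n * s0 \<le> real n * \<bar>sin (real n * t)\<bar>" using s[OF tt(1,2)] by (intro mult_left_mono) auto
    then show ?thesis using ns0 by (simp add: abs_mult)
  qed
  have "poly (pderiv (Q n)) (cos t) * sin t \<noteq> 0" unfolding e using b1 b2 by linarith
  then show "poly (pderiv (Q n)) x \<noteq> 0" using tt by auto
qed

lemma end_bound:
  assumes n4: "4 < n" and c0: "7/10 \<le> c0"
    and sg: "0 < sg" and big: "2*real n/sg + 216 < 7/5 * (real n)^2"
    and t: "0 \<le> ta" "ta \<le> tb" "tb \<le> pi" "sg \<le> sin ta" "sg \<le> sin tb"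
    and sgn: "(\<forall>t\<in>{ta..tb}. c0 \<le> cos (real n * t)) \<or> (\<forall>t\<in>{ta..tb}. cos (real n * t) \<le> - c0)"
  shows "cnt (Q n) (cos tb) (cos ta) \<le> 2"
    and "(\<forall>t\<in>{ta..tb}. poly Fp (cos t) < 2 * c0) \<Longrightarrow> cnt (Q n) (cos tb) (cos ta) = 0"
proof -
  have sin_lb: "sg \<le> sin t" if "ta \<le> t" "t \<le> tb" for t
  proof (cases "t \<le> pi/2")
    case True
    have "sin ta \<le> sin t" using t that True by (intro sin_monotone_2pi_le) auto
    then show ?thesis using t by simp
  next
    case False
    have "sin (pi - tb) \<le> sin (pi - t)" using t that False by (intro sin_monotone_2pi_le) auto
    then show ?thesis using t by simp
  qed
  have pos_case: "cnt (Q n) (cos tb) (cos ta) = 0" if h: "\<forall>t\<in>{ta..tb}. c0 \<le> cos (real n * t)"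
  proof (rule cnt_zero)
    fix x assume x: "cos tb \<le> x" "x \<le> cos ta"
    obtain t where tt: "ta \<le> t" "t \<le> tb" "x = cos t" using theta_of[OF t(1-3) x] by blast
    have "c0 \<le> cos (real n * t)" using h tt by auto
    then show "poly (Q n) x \<noteq> 0" using Q_cos[of n t] Fp_ge[of "cos t"] c0 tt by auto
  qed
  show "cnt (Q n) (cos tb) (cos ta) \<le> 2"
    using sgn
  proof
    assume "\<forall>t\<in>{ta..tb}. c0 \<le> cos (real n * t)"
    then show ?thesis using pos_case by simp
  next
    assume h: "\<forall>t\<in>{ta..tb}. cos (real n * t) \<le> - c0"
    show ?thesis
    proof (rule cnt_le2[OF Q_nz[OF n4]])
      fix x assume x: "cos tb \<le> x" "x \<le> cos ta"
      obtain t where tt: "ta \<le> t" "t \<le> tb" "x = cos t" using theta_of[OF t(1-3) x] by blast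
      have st: "sg \<le> sin t" by (rule sin_lb[OF tt(1,2)])
      have cn: "cos (real n * t) \<le> - c0" using h tt by auto
      have T1: "\<bar>cos t * poly (pderiv (cheb n)) (cos t)\<bar> \<le> real n / sg"
      proof -
        have "\<bar>poly (pderiv (cheb n)) (cos t)\<bar> * sin t = real n * \<bar>sin (real n * t)\<bar>"
          using cheb_D1[of n t] st sg by (metis abs_mult abs_of_nonneg abs_of_nat less_le_trans less_imp_le)
        also have "\<dots> \<le> real n * 1" by (intro mult_left_mono) auto
        finally have A: "\<bar>poly (pderiv (cheb n)) (cos t)\<bar> * sin t \<le> real n" by simp
        have "\<bar>poly (pderiv (cheb n)) (cos t)\<bar> * sg \<le> \<bar>poly (pderiv (cheb n)) (cos t)\<bar> * sin t"
          using st by (intro mult_left_mono) auto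
        with A have "\<bar>poly (pderiv (cheb n)) (cos t)\<bar> * sg \<le> real n" by linarith
        then have B: "\<bar>poly (pderiv (cheb n)) (cos t)\<bar> \<le> real n / sg" using sg by (simp add: pos_le_divide_eq)
        have "\<bar>cos t * poly (pderiv (cheb n)) (cos t)\<bar> \<le> 1 * \<bar>poly (pderiv (cheb n)) (cos t)\<bar>"
          unfolding abs_mult by (intro mult_right_mono) auto
        then show ?thesis using B by linarith
      qed
      have F2: "\<bar>poly (pderiv (pderiv Fp)) (cos t) * (sin t)^2\<bar> \<le> 216"
      proof -
        have "\<bar>poly (pderiv (pderiv Fp)) (cos t)\<bar> \<le> 216" by (rule Fp_D2_bound) simp
        moreover have "\<bar>(sin t)^2\<bar> \<le> 1" by (simp add: abs_square_le_1)
        ultimately have "\<bar>poly (pderiv (pderiv Fp)) (cos t)\<bar> * \<bar>(sin t)^2\<bar> \<le> 216 * 1"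
          by (intro mult_mono) auto
        then show ?thesis by (simp add: abs_mult)
      qed
      have "(real n)^2 * c0 \<le> (real n)^2 * (- cos (real n * t))"
        using cn by (intro mult_left_mono) auto
      then have nc: "(real n)^2 * c0 \<le> - ((real n)^2 * cos (real n * t))" by simp
      have "(real n)^2 * (7/10) \<le> (real n)^2 * c0" using c0 by (intro mult_left_mono) auto
      then have "7/10 * (real n)^2 \<le> (real n)^2 * c0" by (simp add: mult.commute)
      then have pos: "0 < poly (pderiv (pderiv (Q n))) (cos t) * (sin t)^2"
        unfolding Q_D2 using T1 F2 nc big by (simp add: abs_le_iff)
      have "0 < (sin t)^2" using st sg by simp
      then show "0 < poly (pderiv (pderiv (Q n))) x" using pos tt zero_less_mult_pos2 by blast
    qed
  qed
  assume good: "\<forall>t\<in>{ta..tb}. poly Fp (cos t) < 2 * c0"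
  show "cnt (Q n) (cos tb) (cos ta) = 0"
    using sgn
  proof
    assume "\<forall>t\<in>{ta..tb}. c0 \<le> cos (real n * t)"
    then show ?thesis using pos_case by simp
  next
    assume h: "\<forall>t\<in>{ta..tb}. cos (real n * t) \<le> - c0"
    show ?thesis
    proof (rule cnt_zero)
      fix x assume x: "cos tb \<le> x" "x \<le> cos ta"
      obtain t where tt: "ta \<le> t" "t \<le> tb" "x = cos t" using theta_of[OF t(1-3) x] by blast
      have "cos (real n * t) \<le> - c0" "poly Fp (cos t) < 2 * c0" using h good tt by auto
      then show "poly (Q n) x \<noteq> 0" using Q_cos[of n t] tt by auto
    qed
  qed
qed


definition wt :: "nat \<Rightarrow> nat \<Rightarrow> nat" where
  "wt n j = cnt (Q n) (cos (real (Suc j) * pi / n)) (cos (real j * pi / n))"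

lemma window:
  assumes n4: "4 < n" and jn: "j < n" and c0: "7/10 \<le> c0" "c0 < 1"
    and ns0: "44 < real n * sin (arccos c0)"
    and big: "2*real n/sin (al/2) + 216 < 7/5 * (real n)^2"
    and pin: "pi / real n \<le> al/2"
  shows "real (Suc j) * pi / n < al \<or> pi - al < real j * pi / n \<Longrightarrow> wt n j = 0"
    and "\<not> (real (Suc j) * pi / n < al \<or> pi - al < real j * pi / n) \<Longrightarrow> wt n j \<le> 5"
    and "\<not> (real (Suc j) * pi / n < al \<or> pi - al < real j * pi / n) \<Longrightarrow>
         (\<forall>t\<in>{real j * pi / n..real (Suc j) * pi / n}. poly Fp (cos t) < 2 * c0) \<Longrightarrow> wt n j \<le> 1"
proof -
  define p where "p = arccos c0"
  define t0 where "t0 = real j * pi / n"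
  define t3 where "t3 = real (Suc j) * pi / n"
  define t1 where "t1 = t0 + p / n"
  define t2 where "t2 = t3 - p / n"
  have npos: "0 < real n" using n4 by simp
  have p: "0 < p" "p \<le> pi/2" "cos p = c0"
  proof -
    show "0 < p" unfolding p_def using arccos_lt_bounded[of c0] c0 by simp
    have "arccos c0 \<le> arccos 0" by (rule arccos_le_arccos) (use c0 in auto)
    then show "p \<le> pi/2" unfolding p_def by simp
    show "cos p = c0" unfolding p_def using c0 by (simp add: cos_arccos)
  qed
  have t3t0: "t3 = t0 + pi / n" unfolding t3_def t0_def by (simp add: add_divide_distrib[symmetric] algebra_simps)
  have ord: "0 \<le> t0" "t0 \<le> t1" "t1 \<le> t2" "t2 \<le> t3" "t3 \<le> pi"
  proof -
    show "0 \<le> t0" unfolding t0_def using npos by simp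
    show "t0 \<le> t1" unfolding t1_def using p npos by simp
    have "(p + p) / n \<le> pi / n" by (rule divide_right_mono) (use p npos in auto)
    then have "p / n + p / n \<le> pi / n" by (simp add: add_divide_distrib)
    then show "t1 \<le> t2" unfolding t1_def t2_def t3t0 by simp
    show "t2 \<le> t3" unfolding t2_def using p npos by simp
    have "real (Suc j) \<le> real n" using jn by simp
    then have "real (Suc j) * pi \<le> real n * pi" by (intro mult_right_mono) auto
    then show "t3 \<le> pi" unfolding t3_def using npos by (simp add: pos_divide_le_eq mult.commute)
  qed
  have nt: "real n * t = real j * pi + (real n * t - real j * pi)" for t by simp
  have ncos: "cos (real n * t) = (-1)^j * cos (real n * t - real j * pi)" for t
    using cos_add_npi[of "real n * t - real j * pi" j] by simp
  have nsin: "sin (real n * t) = (-1)^j * sin (real n * t - real j * pi)" for t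
    using sin_add_npi[of "real n * t - real j * pi" j] by simp
  have psi: "real n * t - real j * pi = real n * (t - t0)" for t unfolding t0_def using npos by (simp add: field_simps)
  have psi1: "0 \<le> real n * t - real j * pi \<and> real n * t - real j * pi \<le> p" if "t0 \<le> t" "t \<le> t1" for t
  proof -
    have "real n * (t - t0) \<le> real n * (p / n)" using that unfolding t1_def by (intro mult_left_mono) auto
    then show ?thesis unfolding psi using that npos by simp
  qed
  have psi2: "p \<le> real n * t - real j * pi \<and> real n * t - real j * pi \<le> pi - p" if "t1 \<le> t" "t \<le> t2" for t
  proof -
    have "real n * (p / n) \<le> real n * (t - t0)" using that unfolding t1_def by (intro mult_left_mono) auto
    moreover have "real n * (t - t0) \<le> real n * (pi/n - p / n)" using that unfolding t2_def t3t0 by (intro mult_left_mono) auto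
    ultimately show ?thesis unfolding psi using npos by (simp add: right_diff_distrib)
  qed
  have psi3: "pi - p \<le> real n * t - real j * pi \<and> real n * t - real j * pi \<le> pi" if "t2 \<le> t" "t \<le> t3" for t
  proof -
    have "real n * (pi/n - p / n) \<le> real n * (t - t0)" using that unfolding t2_def t3t0 by (intro mult_left_mono) auto
    moreover have "real n * (t - t0) \<le> real n * (pi/n)" using that unfolding t3t0 by (intro mult_left_mono) auto
    ultimately show ?thesis unfolding psi using npos by (simp add: right_diff_distrib)
  qed
  have end1: "(\<forall>t\<in>{t0..t1}. c0 \<le> cos (real n * t)) \<or> (\<forall>t\<in>{t0..t1}. cos (real n * t) \<le> - c0)"
  proof -
    have cc: "c0 \<le> cos (real n * t - real j * pi)" if "t0 \<le> t" "t \<le> t1" for t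
    proof -
      have "cos p \<le> cos (real n * t - real j * pi)"
        by (rule cos_monotone_0_pi_le) (use psi1[OF that] p in auto)
      then show ?thesis using p(3) by simp
    qed
    show ?thesis
    proof (cases "even j")
      case True show ?thesis
      proof (rule disjI1, intro ballI)
        fix t assume "t \<in> {t0..t1}"
        then have "c0 \<le> cos (real n * t - real j * pi)" using cc by auto
        then show "c0 \<le> cos (real n * t)" using \<open>even j\<close> by (simp add: ncos)
      qed
    next
      case False show ?thesis
      proof (rule disjI2, intro ballI)
        fix t assume "t \<in> {t0..t1}"
        then have "c0 \<le> cos (real n * t - real j * pi)" using cc by auto
        then show "cos (real n * t) \<le> - c0" using \<open>odd j\<close> by (simp add: ncos)
      qed
    qed
  qed
  have end2: "(\<forall>t\<in>{t2..t3}. c0 \<le> cos (real n * t)) \<or> (\<forall>t\<in>{t2..t3}. cos (real n * t) \<le> - c0)"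
  proof -
    have cc: "cos (real n * t - real j * pi) \<le> - c0" if "t2 \<le> t" "t \<le> t3" for t
    proof -
      have "cos p \<le> cos (pi - (real n * t - real j * pi))"
        by (rule cos_monotone_0_pi_le) (use psi3[OF that] p in auto)
      then have "c0 \<le> cos (pi - (real n * t - real j * pi))" using p(3) by simp
      then show ?thesis by simp
    qed
    show ?thesis
    proof (cases "even j")
      case True show ?thesis
      proof (rule disjI2, intro ballI)
        fix t assume "t \<in> {t2..t3}"
        then have "cos (real n * t - real j * pi) \<le> - c0" using cc by auto
        then show "cos (real n * t) \<le> - c0" using \<open>even j\<close> by (simp add: ncos)
      qed
    next
      case False show ?thesis
      proof (rule disjI1, intro ballI)
        fix t assume "t \<in> {t2..t3}"
        then have "cos (real n * t - real j * pi) \<le> - c0" using cc by auto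
        then show "c0 \<le> cos (real n * t)" using \<open>odd j\<close> by (simp add: ncos)
      qed
    qed
  qed
  have mid: "sin (arccos c0) \<le> \<bar>sin (real n * t)\<bar>" if "t1 \<le> t" "t \<le> t2" for t
  proof -
    have "sin p \<le> sin (real n * t - real j * pi)" using psi2[OF that] p by (intro sin_ge) auto
    moreover have "\<bar>sin (real n * t)\<bar> = \<bar>sin (real n * t - real j * pi)\<bar>" by (simp add: nsin abs_mult)
    ultimately show ?thesis unfolding p_def by simp
  qed
  have wsplit: "wt n j \<le> cnt (Q n) (cos t1) (cos t0) + cnt (Q n) (cos t2) (cos t1) + cnt (Q n) (cos t3) (cos t2)"
  proof -
    have cm: "cos b \<le> cos a" if "a \<le> b" "0 \<le> a" "b \<le> pi" for a b using that by (intro cos_monotone_0_pi_le) auto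
    have "wt n j \<le> cnt (Q n) (cos t3) (cos t2) + cnt (Q n) (cos t2) (cos t0)"
      unfolding wt_def t3_def[symmetric] t0_def[symmetric]
      by (rule cnt_split[OF Q_nz[OF n4]]) (use ord in \<open>auto intro!: cm\<close>)
    also have "cnt (Q n) (cos t2) (cos t0) \<le> cnt (Q n) (cos t2) (cos t1) + cnt (Q n) (cos t1) (cos t0)"
      by (rule cnt_split[OF Q_nz[OF n4]]) (use ord in \<open>auto intro!: cm\<close>)
    finally show ?thesis by simp
  qed
  show "real (Suc j) * pi / n < al \<or> pi - al < real j * pi / n \<Longrightarrow> wt n j = 0"
    unfolding wt_def t3_def[symmetric] t0_def[symmetric]
    using ord by (intro zero_window) (use npos in auto)
  assume nA: "\<not> (real (Suc j) * pi / n < al \<or> pi - al < real j * pi / n)"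
  then have nA': "al \<le> t3" "t0 \<le> pi - al" unfolding t3_def t0_def by auto
  have sgp: "0 < sin (al/2)" using al_bounds by (intro sin_gt_zero) auto
  have sg: "sin (al/2) \<le> sin t" if "t0 \<le> t" "t \<le> t3" for t
  proof -
    have "al/2 \<le> t" "t \<le> pi - al/2" using that nA' pin unfolding t3t0 by linarith+
    then show ?thesis using al_bounds by (intro sin_ge) auto
  qed
  have e1: "cnt (Q n) (cos t1) (cos t0) \<le> 2"
    by (rule end_bound(1)[OF n4 c0(1) sgp big]) (use ord sg end1 in auto)
  have e2: "cnt (Q n) (cos t3) (cos t2) \<le> 2"
    by (rule end_bound(1)[OF n4 c0(1) sgp big]) (use ord sg end2 in auto)
  have m: "cnt (Q n) (cos t2) (cos t1) \<le> 1"
    by (rule middle_bound[OF n4 ns0]) (use ord mid in auto)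
  show "wt n j \<le> 5" using wsplit e1 e2 m by linarith
  assume good: "\<forall>t\<in>{real j * pi / n..real (Suc j) * pi / n}. poly Fp (cos t) < 2 * c0"
  have good': "\<forall>t\<in>{t0..t3}. poly Fp (cos t) < 2 * c0" using good unfolding t0_def t3_def .
  have e1': "cnt (Q n) (cos t1) (cos t0) = 0"
    by (rule end_bound(2)[OF n4 c0(1) sgp big]) (use ord sg end1 good' in auto)
  have e2': "cnt (Q n) (cos t3) (cos t2) = 0"
    by (rule end_bound(2)[OF n4 c0(1) sgp big]) (use ord sg end2 good' in auto)
  show "wt n j \<le> 1" using wsplit e1' e2' m by linarith
qed


lemma NR_cnt: "NR n = cnt (Q n) (-1) 1"
  unfolding NR_def cnt_def ..

lemma NR_sum:
  assumes n4: "4 < n"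
  shows "NR n \<le> (\<Sum>j<n. wt n j)"
proof -
  have npos: "0 < real n" using n4 by simp
  have ang: "0 \<le> real k * pi / n \<and> real k * pi / n \<le> pi" if "k \<le> n" for k
  proof -
    have "real k * pi \<le> real n * pi" using that by (intro mult_right_mono) auto
    then show ?thesis using npos by (simp add: pos_divide_le_eq mult.commute)
  qed
  have main: "Suc k \<le> n \<longrightarrow> cnt (Q n) (cos (real (Suc k) * pi / n)) 1 \<le> (\<Sum>j<Suc k. wt n j)" for k
  proof (induction k)
    case 0 then show ?case by (simp add: wt_def)
  next
    case (Suc k)
    show ?case
    proof
      assume h: "Suc (Suc k) \<le> n"
      have "cnt (Q n) (cos (real (Suc (Suc k)) * pi / n)) 1 \<le>
          cnt (Q n) (cos (real (Suc (Suc k)) * pi / n)) (cos (real (Suc k) * pi / n)) + cnt (Q n) (cos (real (Suc k) * pi / n)) 1"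
      proof (rule cnt_split[OF Q_nz[OF n4]])
        show "cos (real (Suc k) * pi / n) \<le> 1" by simp
        show "cos (real (Suc (Suc k)) * pi / n) \<le> cos (real (Suc k) * pi / n)"
          using ang[of "Suc k"] ang[of "Suc (Suc k)"] h npos
          by (intro cos_monotone_0_pi_le) (auto simp: divide_right_mono)
      qed
      also have "\<dots> = wt n (Suc k) + cnt (Q n) (cos (real (Suc k) * pi / n)) 1" by (simp only: wt_def)
      also have "\<dots> \<le> wt n (Suc k) + (\<Sum>j<Suc k. wt n j)" using Suc.IH h by simp
      finally show "cnt (Q n) (cos (real (Suc (Suc k)) * pi / n)) 1 \<le> (\<Sum>j<Suc (Suc k). wt n j)" by simp
    qed
  qed
  obtain k where k: "n = Suc k" using n4 by (cases n) auto
  have "cos (real (Suc k) * pi / n) = -1" using k npos by simp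
  then show ?thesis using main[of k] k by (simp add: NR_cnt)
qed

lemma fin_int: "finite {j::nat. A \<le> real j \<and> real j \<le> B}"
  by (rule finite_subset[of _ "{..nat \<lceil>B\<rceil>}"]) (auto, linarith)

lemma div_helper: assumes "x \<le> y" shows "real n * x / pi - 1 \<le> real n * y / pi"
proof -
  have "real n * x \<le> real n * y" using assms by (intro mult_left_mono) auto
  then have "real n * x / pi \<le> real n * y / pi" by (intro divide_right_mono) auto
  then show ?thesis by linarith
qed

lemma NR_upper:
  assumes al': "al < al'" "al' < pi/2"
  shows "\<exists>N0. \<forall>n\<ge>N0. real (NR n) \<le> real n * (1 - 2*al/pi) + 8 * real n * (al' - al)/pi + 18"
proof -
  define d where "d = a2 - (cos al')^2"
  define c0 where "c0 = 1 - 3/10 * d"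
  define s0 where "s0 = sin (arccos c0)"
  define sg where "sg = sin (al/2)"
  have cal': "0 < cos al'" "cos al' < aa"
  proof -
    show "0 < cos al'" using al' al_bounds by (intro cos_gt_zero_pi) auto
    have "cos al' < cos al" using al' al_bounds by (intro cos_monotone_0_pi) auto
    then show "cos al' < aa" using al_bounds by simp
  qed
  have dpos: "0 < d"
  proof -
    have "(cos al')^2 < aa^2" using cal' by (intro power_strict_mono) auto
    then show ?thesis unfolding d_def using aa_sq by simp
  qed
  have d1: "d \<le> 1"
  proof -
    have "aa^2 \<le> 1" using aa_bounds by (intro power_le_one) auto
    moreover have "0 \<le> (cos al')^2" by simp
    ultimately show ?thesis unfolding d_def using aa_sq by linarith
  qed
  have c0: "7/10 \<le> c0" "c0 < 1" unfolding c0_def using dpos d1 by auto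
  have s0: "0 < s0" unfolding s0_def
  proof (rule sin_gt_zero)
    show "0 < arccos c0" using arccos_lt_bounded[of c0] c0 by simp
    show "arccos c0 < pi" using arccos_lt_bounded[of c0] c0 by simp
  qed
  have sg: "0 < sg" unfolding sg_def using al_bounds by (intro sin_gt_zero) auto
  define N0 where "N0 = nat \<lceil>5 + 44/s0 + 2/sg + 216 + 2*pi/al\<rceil>"
  have "real (NR n) \<le> real n * (1 - 2*al/pi) + 8 * real n * (al' - al)/pi + 18" if nN: "n \<ge> N0" for n
  proof -
    have nb: "5 + 44/s0 + 2/sg + 216 + 2*pi/al \<le> real n" using nN unfolding N0_def by linarith
    have pos1: "0 \<le> 44/s0" "0 \<le> 2/sg" "0 \<le> 2*pi/al" using s0 sg al_bounds by auto
    have n4: "4 < n" using nb pos1 by linarith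
    have npos: "0 < real n" using n4 by simp
    have ns0: "44 < real n * s0"
    proof -
      have "44/s0 < real n" using nb pos1 by linarith
      then show ?thesis using s0 by (simp add: divide_less_eq mult.commute)
    qed
    have pin: "pi / real n \<le> al/2"
    proof -
      have "2*pi/al \<le> real n" using nb pos1 by linarith
      then have "2*pi \<le> real n * al" using al_bounds by (simp add: divide_le_eq mult.commute)
      then show ?thesis using npos by (simp add: divide_le_eq mult.commute)
    qed
    have big: "2*real n/sin (al/2) + 216 < 7/5 * (real n)^2"
    proof -
      have "2/sg + 216 \<le> real n" using nb pos1 by linarith
      then have "real n * (2/sg + 216) \<le> real n * real n" using npos by (intro mult_left_mono) auto
      moreover have "2*real n/sg + 216 \<le> real n * (2/sg + 216)" using npos n4 by (simp add: algebra_simps)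
      moreover have "real n * real n < 7/5 * (real n)^2" using npos by (simp add: power2_eq_square)
      ultimately show ?thesis unfolding sg_def by linarith
    qed
    define A where "A j = (real (Suc j) * pi / n < al \<or> pi - al < real j * pi / n)" for j
    define B where "B j = (al' \<le> real j * pi / n \<and> real (Suc j) * pi / n \<le> pi - al')" for j
    have wA: "wt n j = 0" if "j < n" "A j" for j
      using window(1)[OF n4 that(1) c0 ns0[unfolded s0_def] big pin] that(2) unfolding A_def by blast
    have w5: "wt n j \<le> 5" if "j < n" "\<not> A j" for j
      using window(2)[OF n4 that(1) c0 ns0[unfolded s0_def] big pin] that(2) unfolding A_def by blast
    have w1: "wt n j \<le> 1" if "j < n" "\<not> A j" "B j" for j
    proof -
      have "poly Fp (cos t) < 2 * c0" if "t \<in> {real j * pi / n..real (Suc j) * pi / n}" for t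
      proof -
        have t: "al' \<le> t" "t \<le> pi - al'" using that \<open>B j\<close> unfolding B_def by auto
        have "cos t \<le> cos al'" using t al' al_bounds by (intro cos_monotone_0_pi_le) auto
        moreover have "cos (pi - al') \<le> cos t" using t al' al_bounds by (intro cos_monotone_0_pi_le) auto
        ultimately have "\<bar>cos t\<bar> \<le> cos al'" by auto
        then have "\<bar>cos t\<bar>^2 \<le> (cos al')^2" by (intro power_mono) auto
        then have ct: "(cos t)^2 \<le> (cos al')^2" by simp
        then have "(cos t)^2 \<le> a2" using dpos unfolding d_def by linarith
        then have "poly Fp (cos t) \<le> 2 - 6/5 * (a2 - (cos t)^2)" by (rule Fp_le)
        moreover have "a2 - (cos t)^2 \<ge> d" using ct unfolding d_def by linarith
        ultimately have X: "poly Fp (cos t) \<le> 2 - 6/5 * (a2 - (cos t)^2)" "6/5 * d \<le> 6/5 * (a2 - (cos t)^2)"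
          by auto
        have "2 * c0 = 2 - 3/5 * d" by (simp add: c0_def)
        moreover have "3/5 * d < 6/5 * d" using dpos by simp
        ultimately show ?thesis using X by linarith
      qed
      then show ?thesis using window(3)[OF n4 that(1) c0 ns0[unfolded s0_def] big pin] that(2) unfolding A_def by blast
    qed
    define NA where "NA = {j. j < n \<and> \<not> A j}"
    define NAB where "NAB = {j. j < n \<and> \<not> A j \<and> \<not> B j}"
    have "(\<Sum>j<n. wt n j) \<le> (\<Sum>j<n. (if \<not> A j then 1 else 0) + (if \<not> A j \<and> \<not> B j then 4 else 0))"
    proof (rule sum_mono)
      fix j assume j: "j \<in> {..<n}"
      show "wt n j \<le> (if \<not> A j then 1 else 0) + (if \<not> A j \<and> \<not> B j then 4 else 0)"
        using wA[of j] w5[of j] w1[of j] j by auto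
    qed
    also have "\<dots> = card NA + 4 * card NAB"
    proof -
      have "(\<Sum>j<n. (if \<not> A j then 1 else 0)) = card NA"
        unfolding NA_def using sum.inter_filter[of "{..<n}" "\<lambda>_. 1::nat" "\<lambda>j. \<not> A j"]
        by (simp add: lessThan_def Collect_conj_eq[symmetric] conj_commute)
      moreover have "(\<Sum>j<n. (if \<not> A j \<and> \<not> B j then 4 else 0)) = 4 * card NAB"
        unfolding NAB_def using sum.inter_filter[of "{..<n}" "\<lambda>_. 4::nat" "\<lambda>j. \<not> A j \<and> \<not> B j"]
        by (simp add: lessThan_def Collect_conj_eq[symmetric] conj_commute)
      ultimately show ?thesis by (simp add: sum.distrib)
    qed
    finally have S: "NR n \<le> card NA + 4 * card NAB" using NR_sum[OF n4] by linarith
    have cNA: "real (card NA) \<le> real n * (1 - 2*al/pi) + 2"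
    proof -
      have sub: "NA \<subseteq> {j::nat. real n*al/pi - 1 \<le> real j \<and> real j \<le> real n*(pi - al)/pi}"
      proof
        fix j assume "j \<in> NA"
        then have "al \<le> real (Suc j) * pi / n" "real j * pi / n \<le> pi - al" unfolding NA_def A_def by auto
        then have "al * n \<le> real (Suc j) * pi" "real j * pi \<le> (pi - al) * n" using npos
          by (simp_all add: le_divide_eq divide_le_eq)
        then show "j \<in> {j::nat. real n*al/pi - 1 \<le> real j \<and> real j \<le> real n*(pi - al)/pi}"
          by (auto simp: field_simps)
      qed
      have "real (card NA) \<le> real (card {j::nat. real n*al/pi - 1 \<le> real j \<and> real j \<le> real n*(pi - al)/pi})"
        using card_mono[OF fin_int sub] by simp
      also have "\<dots> \<le> real n*(pi - al)/pi - (real n*al/pi - 1) + 1"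
      proof (rule card_upper)
        have "real n * al \<le> real n * (pi - al)" using al_bounds by (intro mult_left_mono) auto
        then have "real n * al / pi \<le> real n * (pi - al) / pi" by (intro divide_right_mono) auto
        then show "real n*al/pi - 1 \<le> real n*(pi - al)/pi" by linarith
      qed
      also have "\<dots> = real n * (1 - 2*al/pi) + 2" by (simp add: field_simps)
      finally show ?thesis .
    qed
    have cNAB: "real (card NAB) \<le> 2 * (real n * (al' - al)/pi + 2)"
    proof -
      define S1 where "S1 = {j::nat. real n*al/pi - 1 \<le> real j \<and> real j \<le> real n*al'/pi}"
      define S2 where "S2 = {j::nat. real n*(pi-al')/pi - 1 \<le> real j \<and> real j \<le> real n*(pi - al)/pi}"
      have sub: "NAB \<subseteq> S1 \<union> S2"
      proof
        fix j assume "j \<in> NAB"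
        then have h: "al \<le> real (Suc j) * pi / n" "real j * pi / n \<le> pi - al"
            "real j * pi / n < al' \<or> pi - al' < real (Suc j) * pi / n"
          unfolding NAB_def A_def B_def by auto
        then have "al * n \<le> real (Suc j) * pi" "real j * pi \<le> (pi - al) * n"
          "real j * pi < al' * n \<or> (pi - al') * n < real (Suc j) * pi" using npos
          by (simp_all add: le_divide_eq divide_le_eq less_divide_eq divide_less_eq)
        then show "j \<in> S1 \<union> S2" unfolding S1_def S2_def by (auto simp: field_simps)
      qed
      have "real (card NAB) \<le> real (card (S1 \<union> S2))"
        using card_mono[OF _ sub] fin_int unfolding S1_def S2_def by simp
      also have "\<dots> \<le> real (card S1) + real (card S2)"
        using card_Un_le[of S1 S2] by linarith
      also have "real (card S1) \<le> real n*al'/pi - (real n*al/pi - 1) + 1"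
        unfolding S1_def by (rule card_upper) (rule div_helper, use al' in linarith)
      also have "real (card S2) \<le> real n*(pi - al)/pi - (real n*(pi-al')/pi - 1) + 1"
        unfolding S2_def by (rule card_upper) (rule div_helper, use al' in linarith)
      finally have "real (card NAB) \<le> (real n*al'/pi - (real n*al/pi - 1) + 1) +
          (real n*(pi - al)/pi - (real n*(pi-al')/pi - 1) + 1)" by simp
      moreover have "(real n*al'/pi - (real n*al/pi - 1) + 1) +
          (real n*(pi - al)/pi - (real n*(pi-al')/pi - 1) + 1) = 2 * (real n * (al' - al)/pi + 2)"
        by (simp add: field_simps)
      ultimately show ?thesis by linarith
    qed
    have "real (NR n) \<le> real (card NA) + 4 * real (card NAB)" using S by linarith
    also have "\<dots> \<le> real n * (1 - 2*al/pi) + 2 + 4 * (2 * (real n * (al' - al)/pi + 2))"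
      using cNA cNAB by linarith
    also have "\<dots> = real n * (1 - 2*al/pi) + 8 * real n * (al' - al)/pi + 18" by (simp add: field_simps)
    finally show ?thesis .
  qed
  then show ?thesis by blast
qed


lemma NR_lim: "(\<lambda>n. real (NR n) / real n) \<longlonglongrightarrow> 1 - 2*al/pi"
proof (rule LIMSEQ_I)
  fix e :: real assume e: "0 < e"
  define al' where "al' = al + min (e*pi/32) ((pi/2 - al)/2)"
  have al'1: "al < al'" unfolding al'_def using e al_bounds by simp
  have "min (e*pi/32) ((pi/2 - al)/2) \<le> (pi/2 - al)/2" by (rule min.cobounded2)
  then have "al' \<le> al + (pi/2 - al)/2" unfolding al'_def by linarith
  moreover have "al + (pi/2 - al)/2 = pi/4 + al/2" by (simp add: field_simps)
  ultimately have al'2: "al' < pi/2" using al_bounds by linarith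
  have al'3: "8 * (al' - al) / pi \<le> e/4"
  proof -
    have "min (e*pi/32) ((pi/2 - al)/2) \<le> e*pi/32" by (rule min.cobounded1)
    then have "al' - al \<le> e*pi/32" unfolding al'_def by linarith
    then have "8 * (al' - al) \<le> 8 * (e*pi/32)" by (intro mult_left_mono) auto
    then have "8 * (al' - al) / pi \<le> 8 * (e*pi/32) / pi" by (intro divide_right_mono) auto
    then show ?thesis by simp
  qed
  obtain N0 where N0: "\<And>n. n \<ge> N0 \<Longrightarrow> real (NR n) \<le> real n * (1 - 2*al/pi) + 8 * real n * (al' - al)/pi + 18"
    using NR_upper[OF al'1 al'2] by blast
  define N where "N = max N0 (nat \<lceil>36/e\<rceil> + 5)"
  have "norm (real (NR n) / real n - (1 - 2*al/pi)) < e" if nN: "n \<ge> N" for n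
  proof -
    have n4: "4 < n" using nN unfolding N_def by simp
    have npos: "0 < real n" using n4 by simp
    have ne: "36/e < real n" using nN unfolding N_def by linarith
    then have ne2: "18 / real n < e/2" using e npos by (simp add: field_simps)
    have ne3: "2 / real n < e" using ne e npos by (simp add: field_simps)
    have up: "real (NR n) / real n \<le> (1 - 2*al/pi) + 8 * (al' - al)/pi + 18 / real n"
    proof -
      have "real (NR n) \<le> real n * (1 - 2*al/pi) + 8 * real n * (al' - al)/pi + 18" using N0 nN unfolding N_def by simp
      also have "\<dots> = real n * ((1 - 2*al/pi) + 8 * (al' - al)/pi + 18 / real n)" using npos by (simp add: field_simps)
      finally show ?thesis using npos by (simp add: pos_divide_le_eq mult.commute)
    qed
    have lo: "(1 - 2*al/pi) - 2 / real n \<le> real (NR n) / real n"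
    proof -
      have "real n * ((1 - 2*al/pi) - 2 / real n) = real n * (1 - 2*al/pi) - 2" using npos by (simp add: field_simps)
      also have "\<dots> \<le> real (NR n)" using NR_lower[OF n4] by simp
      finally show ?thesis using npos by (simp add: pos_le_divide_eq mult.commute)
    qed
    show ?thesis unfolding real_norm_def abs_less_iff using up lo al'3 ne2 ne3 by (intro conjI) linarith+
  qed
  then show "\<exists>no. \<forall>n\<ge>no. norm (real (NR n) / real n - (1 - 2*al/pi)) < e" by blast
qed

theorem mainTheorem7:
  shows "(\<lambda>n. C_ratio (P2n n)) \<longlonglongrightarrow>
           (2 / pi) * arccos (sqrt (3/8 + sqrt 13 / 8))"
proof -
  have "(\<lambda>n. 1 - real (NR n) / real n) \<longlonglongrightarrow> 1 - (1 - 2*al/pi)"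
    by (intro tendsto_diff tendsto_const NR_lim)
  moreover have "1 - (1 - 2*al/pi) = (2 / pi) * arccos (sqrt (3/8 + sqrt 13 / 8))"
    unfolding al_def aa_def by simp
  moreover have "eventually (\<lambda>n. 1 - real (NR n) / real n = C_ratio (P2n n)) sequentially"
    using eventually_gt_at_top[of 4] by eventually_elim (simp add: C_formula)
  ultimately show ?thesis using Lim_transform_eventually by metis
qed


end
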